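(* For any integer $\ell$, let $\mathcal D=\times_{i=1}^\ell\mathcal D_i$ and $\hat{\mathcal D}=\times_{i=1}^\ell\hat{\mathcal D}_i$ where each $\mathcal D_i,\hat{\mathcal D}_i$ is a distribution on $\mathbb R$. If $\|\mathcal D_i-\hat{\mathcal D}_i\|_K\le\xi$ for all $i$, then $\left|\Pr_{\mathcal D}[\mathcal E]-\Pr_{\hat{\mathcal D}}[\mathcal E]\right|\le2\xi\ell$ for every single-intersecting event $\mathcal E\subseteq\mathbb R^\ell$.
   Context: The Kolmogorov distance is $\|P-Q\|_K=\sup_{x\in\mathbb R}|\Pr_{X\sim P}[X\le x]-\Pr_{X\sim Q}[X\le x]|$. An event $\mathcal E\subseteq\mathbb R^\ell$ is single-intersecting if for every $i\in[\ell]$ and every $a_{-i}\in\mathbb R^{\ell-1}$, the intersection of $\mathcal E$ with the line $\{x:x_{-i}=a_{-i}\}$ is of the form $\{x:x_{-i}=a_{-i},\ x_i\in[\underline a,\bar a]\}$ (an interval, possibly empty, endpoints allowed to be $\pm\infty$). *)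

theory Defs
  imports "HOL-Probability.Probability"
begin

definition kolmogorov_dist :: "real measure \<Rightarrow> real measure \<Rightarrow> real" where
  "kolmogorov_dist P Q = (SUP x. \<bar>measure P {..x} - measure Q {..x}\<bar>)"

text \<open>Single-intersecting events in R^I (points are extensional functions on the
  index set I).\<close>
definition single_intersecting :: "nat set \<Rightarrow> (nat \<Rightarrow> real) set \<Rightarrow> bool" where
  "single_intersecting I E \<longleftrightarrow>
     E \<subseteq> (\<Pi>\<^sub>E i\<in>I. UNIV) \<and>
     (\<forall>i\<in>I. \<forall>a\<in>(\<Pi>\<^sub>E i\<in>I. UNIV).
        \<exists>lo hi :: ereal. {t. a(i := t) \<in> E} = {t. lo \<le> ereal t \<and> ereal t \<le> hi})"

end

theory Submission
  imports Defs
begin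


lemma kd_point:
  assumes P: "prob_space P" "sets P = sets borel" and Q: "prob_space Q" "sets Q = sets borel"
    and kd: "kolmogorov_dist P Q \<le> \<xi>"
  shows "\<bar>measure P {..x} - measure Q {..x}\<bar> \<le> \<xi>"
proof -
  have "bdd_above (range (\<lambda>x. \<bar>measure P {..x} - measure Q {..x}\<bar>))"
  proof (rule bdd_aboveI)
    fix y assume "y \<in> range (\<lambda>x. \<bar>measure P {..x} - measure Q {..x}\<bar>)"
    then obtain x where "y = \<bar>measure P {..x} - measure Q {..x}\<bar>" by auto
    moreover have "measure P {..x} \<le> 1" "measure Q {..x} \<le> 1"
      using prob_space.prob_le_1 P(1) Q(1) by auto
    moreover have "measure P {..x} \<ge> 0" "measure Q {..x} \<ge> 0" by auto
    ultimately show "y \<le> 2" by linarith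
  qed
  then have "\<bar>measure P {..x} - measure Q {..x}\<bar> \<le> kolmogorov_dist P Q"
    unfolding kolmogorov_dist_def by (rule cSUP_upper[OF UNIV_I])
  with kd show ?thesis by linarith
qed

lemma kd_point_lt:
  assumes P: "prob_space P" "sets P = sets borel" and Q: "prob_space Q" "sets Q = sets borel"
    and kd: "kolmogorov_dist P Q \<le> \<xi>"
  shows "\<bar>measure P {..<x} - measure Q {..<x}\<bar> \<le> \<xi>"
proof -
  interpret PP: prob_space P by fact
  interpret QQ: prob_space Q by fact
  define A where "A n = {..x - 1 / Suc n}" for n :: nat
  have inc: "incseq A" unfolding A_def
    by (auto simp: incseq_def frac_le)
  have U: "(\<Union>n. A n) = {..<x}"
  proof
    show "(\<Union>n. A n) \<subseteq> {..<x}"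
    proof
      fix t assume "t \<in> (\<Union>n. A n)"
      then obtain n where "t \<le> x - 1 / Suc n" by (auto simp: A_def)
      moreover have "1 / real (Suc n) > 0" by auto
      ultimately have "t < x" by linarith
      then show "t \<in> {..<x}" by simp
    qed
    show "{..<x} \<subseteq> (\<Union>n. A n)"
    proof
      fix t assume "t \<in> {..<x}"
      then have "x - t > 0" by auto
      then obtain n :: nat where "1 / Suc n < x - t"
        using nat_approx_posE by blast
      then have "t \<in> A n" by (simp add: A_def)
      then show "t \<in> (\<Union>n. A n)" by blast
    qed
  qed
  have rP: "range A \<subseteq> sets P" "range A \<subseteq> sets Q" using P Q by (auto simp: A_def)
  have "(\<lambda>n. measure P (A n)) \<longlonglongrightarrow> measure P {..<x}"
    using PP.finite_Lim_measure_incseq[OF rP(1) inc] U by simp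
  moreover have "(\<lambda>n. measure Q (A n)) \<longlonglongrightarrow> measure Q {..<x}"
    using QQ.finite_Lim_measure_incseq[OF rP(2) inc] U by simp
  ultimately have "(\<lambda>n. \<bar>measure P (A n) - measure Q (A n)\<bar>) \<longlonglongrightarrow> \<bar>measure P {..<x} - measure Q {..<x}\<bar>"
    by (intro tendsto_intros)
  moreover have "\<And>n. \<bar>measure P (A n) - measure Q (A n)\<bar> \<le> \<xi>"
    unfolding A_def by (rule kd_point[OF P Q kd])
  ultimately show ?thesis by (meson LIMSEQ_le_const2)
qed



lemma ray_le:
  assumes P: "prob_space P" "sets P = sets borel" and Q: "prob_space Q" "sets Q = sets borel"
    and kd: "kolmogorov_dist P Q \<le> \<xi>"
  shows "\<bar>measure P {t. ereal t \<le> h} - measure Q {t. ereal t \<le> h}\<bar> \<le> \<xi>"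
proof -
  have x0: "0 \<le> \<xi>" using kd_point[OF P Q kd, of 0] by linarith
  have sp: "space P = UNIV" "space Q = UNIV" using P Q sets_eq_imp_space_eq[of _ borel] by auto
  show ?thesis
  proof (cases h)
    case (real r)
    then have "{t. ereal t \<le> h} = {..r}" by auto
    then show ?thesis using kd_point[OF P Q kd] by simp
  next
    case PInf
    then have "{t. ereal t \<le> h} = UNIV" by auto
    then show ?thesis using x0 prob_space.prob_space[OF P(1)] prob_space.prob_space[OF Q(1)] sp by simp
  next
    case MInf
    then have "{t. ereal t \<le> h} = {}" by auto
    then show ?thesis using x0 by simp
  qed
qed

lemma ray_lt:
  assumes P: "prob_space P" "sets P = sets borel" and Q: "prob_space Q" "sets Q = sets borel"
    and kd: "kolmogorov_dist P Q \<le> \<xi>"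
  shows "\<bar>measure P {t. ereal t < h} - measure Q {t. ereal t < h}\<bar> \<le> \<xi>"
proof -
  have x0: "0 \<le> \<xi>" using kd_point[OF P Q kd, of 0] by linarith
  have sp: "space P = UNIV" "space Q = UNIV" using P Q sets_eq_imp_space_eq[of _ borel] by auto
  show ?thesis
  proof (cases h)
    case (real r)
    then have "{t. ereal t < h} = {..<r}" by auto
    then show ?thesis using kd_point_lt[OF P Q kd] by simp
  next
    case PInf
    then have "{t. ereal t < h} = UNIV" by auto
    then show ?thesis using x0 prob_space.prob_space[OF P(1)] prob_space.prob_space[OF Q(1)] sp by simp
  next
    case MInf
    then have "{t. ereal t < h} = {}" by auto
    then show ?thesis using x0 by simp
  qed
qed

lemma ray_sets: "{t. ereal t \<le> h} \<in> sets borel" "{t. ereal t < h} \<in> sets borel"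
  by (cases h; auto)+

lemma interval_bound:
  assumes P: "prob_space P" "sets P = sets borel" and Q: "prob_space Q" "sets Q = sets borel"
    and kd: "kolmogorov_dist P Q \<le> \<xi>"
  shows "\<bar>measure P {t. lo \<le> ereal t \<and> ereal t \<le> hi} - measure Q {t. lo \<le> ereal t \<and> ereal t \<le> hi}\<bar> \<le> 2 * \<xi>"
proof -
  have x0: "0 \<le> \<xi>" using kd_point[OF P Q kd, of 0] by linarith
  let ?S = "{t. lo \<le> ereal t \<and> ereal t \<le> hi}"
  let ?U = "{t. ereal t \<le> hi}" and ?L = "{t. ereal t < lo}"
  show ?thesis
  proof (cases "?S = {}")
    case True then show ?thesis using x0 by (simp only: True measure_empty)
  next
    case False
    then obtain t0 where "lo \<le> ereal t0" "ereal t0 \<le> hi" by auto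
    then have "lo \<le> hi" by auto
    then have sub: "?L \<subseteq> ?U" by auto
    have eq: "?S = ?U - ?L" by auto
    have mP: "measure P ?S = measure P ?U - measure P ?L"
      unfolding eq using sub P ray_sets
      by (intro finite_measure.finite_measure_Diff) (auto intro: prob_space.axioms(1)[OF P(1)] simp: prob_space_def)
    have mQ: "measure Q ?S = measure Q ?U - measure Q ?L"
      unfolding eq using sub Q ray_sets
      by (intro finite_measure.finite_measure_Diff) (auto simp: prob_space_def)
    show ?thesis unfolding mP mQ
      using ray_le[OF P Q kd, of hi] ray_lt[OF P Q kd, of lo] by linarith
  qed
qed



lemma (in product_sigma_finite) product_integral_insert_rev:
  fixes f :: "_ \<Rightarrow> real"
  assumes I: "finite I" "i \<notin> I" and f: "integrable (Pi\<^sub>M (insert i I) M) f"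
  shows "integral\<^sup>L (Pi\<^sub>M (insert i I) M) f = (\<integral>y. (\<integral>x. f (x(i:=y)) \<partial>Pi\<^sub>M I M) \<partial>M i)"
proof -
  interpret I: finite_product_sigma_finite M I by standard fact
  have fb: "f \<in> borel_measurable (Pi\<^sub>M (insert i I) M)" using f by auto
  have upd: "(\<lambda>p. (snd p)(i := fst p)) \<in> measurable (M i \<Otimes>\<^sub>M Pi\<^sub>M I M) (Pi\<^sub>M (insert i I) M)"
    by (rule measurable_fun_upd[where J=I]) auto
  have m2: "(\<lambda>(y, x). f (x(i:=y))) \<in> borel_measurable (M i \<Otimes>\<^sub>M Pi\<^sub>M I M)"
    using measurable_comp[OF upd fb] by (simp add: comp_def case_prod_beta)
  have "integral\<^sup>L (Pi\<^sub>M (insert i I) M) f = integral\<^sup>L (Pi\<^sub>M ({i} \<union> I) M) f" by simp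
  also have "\<dots> = (\<integral>x. (\<integral>y. f (merge {i} I (x,y)) \<partial>Pi\<^sub>M I M) \<partial>Pi\<^sub>M {i} M)"
    using f I by (intro product_integral_fold) auto
  also have "\<dots> = (\<integral>x. (\<integral>y. f (y(i := x i)) \<partial>Pi\<^sub>M I M) \<partial>Pi\<^sub>M {i} M)"
    apply (rule Bochner_Integration.integral_cong[OF refl])
    apply (rule Bochner_Integration.integral_cong[OF refl])
    using I by (auto intro!: arg_cong[where f=f] simp: merge_def space_PiM extensional_def PiE_def fun_eq_iff)
  also have "\<dots> = (\<integral>y. (\<integral>x. f (x(i:=y)) \<partial>Pi\<^sub>M I M) \<partial>M i)"
    by (rule product_integral_singleton, rule I.borel_measurable_lebesgue_integral) (use m2 in simp)
  finally show ?thesis .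
qed



lemma diff_int_bound:
  fixes f g :: "'a \<Rightarrow> real"
  assumes P: "prob_space P" and f: "integrable P f" and g: "integrable P g"
    and b: "\<And>x. x \<in> space P \<Longrightarrow> \<bar>f x - g x\<bar> \<le> c"
  shows "\<bar>integral\<^sup>L P f - integral\<^sup>L P g\<bar> \<le> c"
proof -
  interpret prob_space P by fact
  have fg: "integrable P (\<lambda>x. f x - g x)" using f g by simp
  have "(\<integral>x. f x - g x \<partial>P) \<le> (\<integral>x. c \<partial>P)"
    by (rule integral_mono) (use fg b in \<open>auto simp: abs_le_iff\<close>)
  moreover have "(\<integral>x. - c \<partial>P) \<le> (\<integral>x. f x - g x \<partial>P)"
    by (rule integral_mono) (use fg b in \<open>force simp: abs_le_iff\<close>)+
  ultimately show ?thesis using f g by (simp add: abs_le_iff prob_space)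
qed

lemma space_borelish:
  assumes "sets X = sets borel" shows "space X = UNIV"
  using sets_eq_imp_space_eq[OF assms] by simp

lemma insert_form:
  fixes X :: "nat \<Rightarrow> real measure"
  assumes PX: "\<And>j. prob_space (X j) \<and> sets (X j) = sets borel" and I: "finite I" "i \<notin> I"
    and E: "E \<in> sets (Pi\<^sub>M (insert i I) X)"
  shows "integrable (Pi\<^sub>M I X) (\<lambda>x. measure (X i) {y. x(i:=y) \<in> E})"
    "measure (Pi\<^sub>M (insert i I) X) E = (\<integral>x. measure (X i) {y. x(i:=y) \<in> E} \<partial>Pi\<^sub>M I X)"
proof -
  interpret S: product_sigma_finite X
    using PX by (auto simp: product_sigma_finite_def intro: prob_space_imp_sigma_finite)
  have sp: "\<And>j. space (X j) = UNIV" using PX space_borelish by blast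
  have pI: "prob_space (Pi\<^sub>M I X)" and pII: "prob_space (Pi\<^sub>M (insert i I) X)"
    using PX by (auto intro!: prob_space_PiM)
  have Esp: "E \<inter> space (Pi\<^sub>M (insert i I) X) = E" using E sets.sets_into_space by blast
  have inner: "(\<integral>y. indicator E (x(i:=y)) \<partial>X i) = (measure (X i) {y. x(i:=y) \<in> E} :: real)"
    if x: "x \<in> space (Pi\<^sub>M I X)" for x
  proof -
    have "(\<integral>y. indicator E (x(i:=y)) \<partial>X i) = (\<integral>y. indicator {y. x(i:=y) \<in> E} y \<partial>X i :: real)"
      by (rule Bochner_Integration.integral_cong) (auto simp: indicator_def)
    then show ?thesis using sp by simp
  qed
  have upd: "(\<lambda>(f, y). f(i := y)) \<in> measurable (Pi\<^sub>M I X \<Otimes>\<^sub>M X i) (Pi\<^sub>M (insert i I) X)"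
    by (rule measurable_add_dim)
  have Eb: "(indicator E :: _ \<Rightarrow> real) \<in> borel_measurable (Pi\<^sub>M (insert i I) X)"
    using E by simp
  have m2: "(\<lambda>(x, y). indicator E (x(i:=y)) :: real) \<in> borel_measurable (Pi\<^sub>M I X \<Otimes>\<^sub>M X i)"
    using measurable_comp[OF upd Eb] by (simp add: comp_def case_prod_beta)
  have mb: "(\<lambda>x. \<integral>y. indicator E (x(i:=y)) \<partial>X i :: real) \<in> borel_measurable (Pi\<^sub>M I X)"
    using m2 by (rule S.sigma_finite_measures[THEN sigma_finite_measure.borel_measurable_lebesgue_integral])
  have mb2: "(\<lambda>x. measure (X i) {y. x(i:=y) \<in> E}) \<in> borel_measurable (Pi\<^sub>M I X)"
    using mb by (rule measurable_cong[THEN iffD1, rotated]) (simp add: inner)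
  show int: "integrable (Pi\<^sub>M I X) (\<lambda>x. measure (X i) {y. x(i:=y) \<in> E})"
  proof (rule finite_measure.integrable_const_bound[where B=1])
    show "finite_measure (Pi\<^sub>M I X)" using pI by (simp add: prob_space_def)
    show "AE x in Pi\<^sub>M I X. norm (measure (X i) {y. x(i:=y) \<in> E}) \<le> 1"
      by (intro AE_I2) (simp add: PX prob_space.prob_le_1)
  qed (rule mb2)
  have "measure (Pi\<^sub>M (insert i I) X) E = (\<integral>z. indicator E z \<partial>Pi\<^sub>M (insert i I) X :: real)"
    using Esp by simp
  also have "\<dots> = (\<integral>x. (\<integral>y. indicator E (x(i:=y)) \<partial>X i) \<partial>Pi\<^sub>M I X)"
    by (rule S.product_integral_insert[OF I]) (use E pII in \<open>auto intro!: integrable_real_indicator simp: prob_space_def finite_measure.emeasure_finite less_top[symmetric]\<close>)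
  also have "\<dots> = (\<integral>x. measure (X i) {y. x(i:=y) \<in> E} \<partial>Pi\<^sub>M I X)"
    by (rule Bochner_Integration.integral_cong[OF refl]) (simp add: inner)
  finally show "measure (Pi\<^sub>M (insert i I) X) E = (\<integral>x. measure (X i) {y. x(i:=y) \<in> E} \<partial>Pi\<^sub>M I X)" .
qed



lemma rev_form:
  fixes X :: "nat \<Rightarrow> real measure"
  assumes PX: "\<And>j. prob_space (X j) \<and> sets (X j) = sets borel" and I: "finite I" "i \<notin> I"
    and E: "E \<in> sets (Pi\<^sub>M (insert i I) X)"
  shows "\<And>y. {x \<in> space (Pi\<^sub>M I X). x(i:=y) \<in> E} \<in> sets (Pi\<^sub>M I X)"
    "integrable (X i) (\<lambda>y. measure (Pi\<^sub>M I X) {x \<in> space (Pi\<^sub>M I X). x(i:=y) \<in> E})"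
    "measure (Pi\<^sub>M (insert i I) X) E = (\<integral>y. measure (Pi\<^sub>M I X) {x \<in> space (Pi\<^sub>M I X). x(i:=y) \<in> E} \<partial>X i)"
proof -
  interpret S: product_sigma_finite X
    using PX by (auto simp: product_sigma_finite_def intro: prob_space_imp_sigma_finite)
  have sp: "\<And>j. space (X j) = UNIV" using PX space_borelish by blast
  have pI: "prob_space (Pi\<^sub>M I X)" and pII: "prob_space (Pi\<^sub>M (insert i I) X)"
    using PX by (auto intro!: prob_space_PiM)
  have Esp: "E \<inter> space (Pi\<^sub>M (insert i I) X) = E" using E sets.sets_into_space by blast
  show Ey: "{x \<in> space (Pi\<^sub>M I X). x(i:=y) \<in> E} \<in> sets (Pi\<^sub>M I X)" for y
  proof -
    have "(\<lambda>x. (id x)(i := (\<lambda>_. y) x)) \<in> measurable (Pi\<^sub>M I X) (Pi\<^sub>M (insert i I) X)"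
      by (rule measurable_fun_upd[where J=I]) (auto simp: sp)
    from measurable_sets[OF this E] show ?thesis by (simp add: vimage_def Int_def conj_commute)
  qed
  have inner: "(\<integral>x. indicator E (x(i:=y)) \<partial>Pi\<^sub>M I X) = (measure (Pi\<^sub>M I X) {x \<in> space (Pi\<^sub>M I X). x(i:=y) \<in> E} :: real)"
    for y
  proof -
    have "(\<integral>x. indicator E (x(i:=y)) \<partial>Pi\<^sub>M I X) = (\<integral>x. indicator {x \<in> space (Pi\<^sub>M I X). x(i:=y) \<in> E} x \<partial>Pi\<^sub>M I X :: real)"
      by (rule Bochner_Integration.integral_cong) (auto simp: indicator_def)
    moreover have "{x \<in> space (Pi\<^sub>M I X). x(i:=y) \<in> E} \<inter> space (Pi\<^sub>M I X) = {x \<in> space (Pi\<^sub>M I X). x(i:=y) \<in> E}" by blast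
    ultimately show ?thesis by (simp only: Bochner_Integration.integral_indicator)
  qed
  have upd: "(\<lambda>p. (snd p)(i := fst p)) \<in> measurable (X i \<Otimes>\<^sub>M Pi\<^sub>M I X) (Pi\<^sub>M (insert i I) X)"
    by (rule measurable_fun_upd[where J=I]) auto
  have Eb: "(indicator E :: _ \<Rightarrow> real) \<in> borel_measurable (Pi\<^sub>M (insert i I) X)"
    using E by simp
  have m2: "(\<lambda>(y, x). indicator E (x(i:=y)) :: real) \<in> borel_measurable (X i \<Otimes>\<^sub>M Pi\<^sub>M I X)"
    using measurable_comp[OF upd Eb] by (simp add: comp_def case_prod_beta)
  have sfI: "sigma_finite_measure (Pi\<^sub>M I X)" using pI by (rule prob_space_imp_sigma_finite)
  have mb: "(\<lambda>y. \<integral>x. indicator E (x(i:=y)) \<partial>Pi\<^sub>M I X :: real) \<in> borel_measurable (X i)"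
    using m2 by (rule sfI[THEN sigma_finite_measure.borel_measurable_lebesgue_integral])
  have mb2: "(\<lambda>y. measure (Pi\<^sub>M I X) {x \<in> space (Pi\<^sub>M I X). x(i:=y) \<in> E}) \<in> borel_measurable (X i)"
    using mb by (simp add: inner)
  show int: "integrable (X i) (\<lambda>y. measure (Pi\<^sub>M I X) {x \<in> space (Pi\<^sub>M I X). x(i:=y) \<in> E})"
  proof (rule finite_measure.integrable_const_bound[where B=1])
    show "finite_measure (X i)" using PX by (simp add: prob_space_def)
    show "AE x in X i. norm (measure (Pi\<^sub>M I X) {x' \<in> space (Pi\<^sub>M I X). x'(i:=x) \<in> E}) \<le> 1"
      by (intro AE_I2) (simp add: pI prob_space.prob_le_1)
  qed (rule mb2)
  have "measure (Pi\<^sub>M (insert i I) X) E = (\<integral>z. indicator E z \<partial>Pi\<^sub>M (insert i I) X :: real)"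
    using Esp by simp
  also have "\<dots> = (\<integral>y. (\<integral>x. indicator E (x(i:=y)) \<partial>Pi\<^sub>M I X) \<partial>X i)"
    by (rule S.product_integral_insert_rev[OF I]) (use E pII in \<open>auto intro!: integrable_real_indicator simp: prob_space_def finite_measure.emeasure_finite less_top[symmetric]\<close>)
  also have "\<dots> = (\<integral>y. measure (Pi\<^sub>M I X) {x \<in> space (Pi\<^sub>M I X). x(i:=y) \<in> E} \<partial>X i)"
    by (simp add: inner)
  finally show "measure (Pi\<^sub>M (insert i I) X) E = (\<integral>y. measure (Pi\<^sub>M I X) {x \<in> space (Pi\<^sub>M I X). x(i:=y) \<in> E} \<partial>X i)" .
qed



lemma sets_PiM_borelish:
  assumes "\<And>j. sets (X j) = sets borel" "\<And>j. sets (Y j) = sets borel"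
  shows "sets (Pi\<^sub>M I X) = sets (Pi\<^sub>M I Y)"
  by (rule sets_PiM_cong) (auto simp: assms)

lemma space_PiM_borelish:
  assumes "\<And>j. sets (X j) = sets borel"
  shows "space (Pi\<^sub>M I X) = (\<Pi>\<^sub>E j\<in>I. UNIV)"
proof -
  have "\<And>j. space (X j) = UNIV" using assms space_borelish by blast
  then show ?thesis by (simp add: space_PiM)
qed

lemma core:
  fixes M N :: "nat \<Rightarrow> real measure"
  assumes PM: "\<And>j. prob_space (M j) \<and> sets (M j) = sets borel"
    and PN: "\<And>j. prob_space (N j) \<and> sets (N j) = sets borel"
  shows "finite I \<Longrightarrow> (\<And>j. j \<in> I \<Longrightarrow> kolmogorov_dist (M j) (N j) \<le> \<xi>) \<Longrightarrow>
    E \<in> sets (Pi\<^sub>M I M) \<Longrightarrow> single_intersecting I E \<Longrightarrow>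
    \<bar>measure (Pi\<^sub>M I M) E - measure (Pi\<^sub>M I N) E\<bar> \<le> 2 * \<xi> * real (card I)"
proof (induction I arbitrary: E rule: finite_induct)
  case empty
  then show ?case by (simp add: PiM_empty)
next
  case (insert i I E)
  define H where "H j = (if j = i then N i else M j)" for j
  have PH: "\<And>j. prob_space (H j) \<and> sets (H j) = sets borel" using PM PN by (simp add: H_def)
  have HI: "Pi\<^sub>M I H = Pi\<^sub>M I M" using insert(2) by (intro PiM_cong) (auto simp: H_def)
  have Hi: "H i = N i" by (simp add: H_def)
  have kdi: "kolmogorov_dist (M i) (N i) \<le> \<xi>" using insert by simp
  have EM: "E \<in> sets (Pi\<^sub>M (insert i I) M)" by fact
  have "sets (Pi\<^sub>M (insert i I) H) = sets (Pi\<^sub>M (insert i I) M)"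
    by (rule sets_PiM_borelish) (simp_all add: PH PM)
  then have EH: "E \<in> sets (Pi\<^sub>M (insert i I) H)" using EM by simp
  have "sets (Pi\<^sub>M (insert i I) N) = sets (Pi\<^sub>M (insert i I) M)"
    by (rule sets_PiM_borelish) (simp_all add: PN PM)
  then have EN: "E \<in> sets (Pi\<^sub>M (insert i I) N)" using EM by simp
  have si: "single_intersecting (insert i I) E" by fact
  have spIM: "space (Pi\<^sub>M I M) = (\<Pi>\<^sub>E j\<in>I. UNIV)" by (rule space_PiM_borelish) (simp add: PM)
  have spIN: "space (Pi\<^sub>M I N) = (\<Pi>\<^sub>E j\<in>I. UNIV)" by (rule space_PiM_borelish) (simp add: PN)
  have pIM: "prob_space (Pi\<^sub>M I M)" by (rule prob_space_PiM) (simp add: PM)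
  have pNi: "prob_space (N i)" by (simp add: PN)
  have a: "\<bar>measure (Pi\<^sub>M (insert i I) M) E - measure (Pi\<^sub>M (insert i I) H) E\<bar> \<le> 2 * \<xi>"
  proof -
    note fM = insert_form[OF PM insert(1,2) EM]
    note fH = insert_form[OF PH insert(1,2) EH, unfolded HI Hi]
    show ?thesis unfolding fM(2) fH(2)
    proof (rule diff_int_bound[OF pIM fM(1) fH(1)])
      fix x assume x: "x \<in> space (Pi\<^sub>M I M)"
      have "x(i:=0) \<in> (\<Pi>\<^sub>E j\<in>insert i I. UNIV)" using x spIM by (auto simp: PiE_def extensional_def)
      then obtain lo hi :: ereal where "{t. (x(i:=0))(i := t) \<in> E} = {t. lo \<le> ereal t \<and> ereal t \<le> hi}"
        using si unfolding single_intersecting_def by blast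
      then have S: "{y. x(i:=y) \<in> E} = {t. lo \<le> ereal t \<and> ereal t \<le> hi}" by simp
      show "\<bar>measure (M i) {y. x(i:=y) \<in> E} - measure (N i) {y. x(i:=y) \<in> E}\<bar> \<le> 2 * \<xi>"
        unfolding S by (rule interval_bound) (simp_all add: PM PN kdi)
    qed
  qed
  have b: "\<bar>measure (Pi\<^sub>M (insert i I) H) E - measure (Pi\<^sub>M (insert i I) N) E\<bar> \<le> 2 * \<xi> * real (card I)"
  proof -
    note fH = rev_form[OF PH insert(1,2) EH, unfolded HI Hi]
    note fN = rev_form[OF PN insert(1,2) EN]
    have eqsp: "{x \<in> space (Pi\<^sub>M I N). x(i:=y) \<in> E} = {x \<in> space (Pi\<^sub>M I M). x(i:=y) \<in> E}" for y
      using spIM spIN by simp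
    show ?thesis unfolding fH(3) fN(3) eqsp
    proof (rule diff_int_bound[OF pNi fH(2)])
      show "integrable (N i) (\<lambda>y. measure (Pi\<^sub>M I N) {x \<in> space (Pi\<^sub>M I M). x(i := y) \<in> E})"
        using fN(2) unfolding eqsp .
      fix y
      let ?Ey = "{x \<in> space (Pi\<^sub>M I M). x(i := y) \<in> E}"
      have Ey: "?Ey \<in> sets (Pi\<^sub>M I M)" by (rule fH(1))
      have siy: "single_intersecting I ?Ey"
        unfolding single_intersecting_def
      proof (intro conjI ballI)
        show "?Ey \<subseteq> (\<Pi>\<^sub>E j\<in>I. UNIV)" using spIM by auto
        fix j :: nat and a :: "nat \<Rightarrow> real" assume j: "j \<in> I" and a: "a \<in> (\<Pi>\<^sub>E j\<in>I. UNIV)"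
        have ji: "j \<noteq> i" using j insert(2) by auto
        have "a(i:=y) \<in> (\<Pi>\<^sub>E j\<in>insert i I. UNIV)" using a by (auto simp: PiE_def extensional_def)
        then obtain lo hi :: ereal where LH: "{t. (a(i:=y))(j := t) \<in> E} = {t. lo \<le> ereal t \<and> ereal t \<le> hi}"
          using si j unfolding single_intersecting_def by blast
        have inS: "a(j:=t) \<in> space (Pi\<^sub>M I M)" for t
          using a j unfolding spIM by (auto simp: PiE_def extensional_def)
        have tw: "(a(j:=t))(i:=y) = (a(i:=y))(j:=t)" for t using ji by (rule fun_upd_twist)
        have "{t. a(j := t) \<in> ?Ey} = {t. (a(i:=y))(j := t) \<in> E}"
          using inS tw by simp
        then show "\<exists>lo hi :: ereal. {t. a(j := t) \<in> ?Ey} = {t. lo \<le> ereal t \<and> ereal t \<le> hi}"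
          using LH by auto
      qed
      have "\<bar>measure (Pi\<^sub>M I M) ?Ey - measure (Pi\<^sub>M I N) ?Ey\<bar> \<le> 2 * \<xi> * real (card I)"
        by (rule insert.IH[OF _ Ey siy]) (simp add: insert.prems)
      then show "\<bar>measure (Pi\<^sub>M I M) ?Ey - measure (Pi\<^sub>M I N) ?Ey\<bar> \<le> 2 * \<xi> * real (card I)" .
    qed
  qed
  have "card (insert i I) = Suc (card I)" using insert(1,2) by simp
  then show ?case using a b by (simp add: algebra_simps)
qed


theorem mainTheorem18:
  fixes l :: nat and D Dh :: "nat \<Rightarrow> real measure" and \<xi> :: real
    and E :: "(nat \<Rightarrow> real) set"
  assumes "\<And>i. i < l \<Longrightarrow> prob_space (D i) \<and> sets (D i) = sets borel"
    and "\<And>i. i < l \<Longrightarrow> prob_space (Dh i) \<and> sets (Dh i) = sets borel"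
    and "\<And>i. i < l \<Longrightarrow> kolmogorov_dist (D i) (Dh i) \<le> \<xi>"
    and "E \<in> sets (\<Pi>\<^sub>M i\<in>{..<l}. D i)"
    and "single_intersecting {..<l} E"
  shows "\<bar>measure (\<Pi>\<^sub>M i\<in>{..<l}. D i) E - measure (\<Pi>\<^sub>M i\<in>{..<l}. Dh i) E\<bar>
           \<le> 2 * \<xi> * real l"
proof -
  define M where "M j = (if j < l then D j else return borel 0)" for j
  define N where "N j = (if j < l then Dh j else return borel 0)" for j
  have PM: "\<And>j. prob_space (M j) \<and> sets (M j) = sets borel"
    using assms(1) by (auto simp: M_def prob_space_return)
  have PN: "\<And>j. prob_space (N j) \<and> sets (N j) = sets borel"
    using assms(2) by (auto simp: N_def prob_space_return)
  have eM: "(\<Pi>\<^sub>M i\<in>{..<l}. D i) = Pi\<^sub>M {..<l} M" by (intro PiM_cong) (auto simp: M_def)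
  have eN: "(\<Pi>\<^sub>M i\<in>{..<l}. Dh i) = Pi\<^sub>M {..<l} N" by (intro PiM_cong) (auto simp: N_def)
  have "\<bar>measure (Pi\<^sub>M {..<l} M) E - measure (Pi\<^sub>M {..<l} N) E\<bar> \<le> 2 * \<xi> * real (card {..<l})"
  proof (rule core[OF PM PN])
    show "E \<in> sets (Pi\<^sub>M {..<l} M)" using assms(4) eM by simp
  qed (use assms(3,5) in \<open>auto simp: M_def N_def\<close>)
  then show ?thesis by (simp add: eM eN)
qed

end
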